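(* For every integer $m\ge0$, the measure $\mathbb{P}^{(m)}_{\sigma}$ gives full measure to the set of paths $x=(x_p)_{p\in\mathcal P}\in\prod_{p\in\mathcal P}D(\mathbb{Q}_p)$ such that $x(t)\in\mathbb{A}_{\mathbb{Q}}$ for all $t\ge0$; that is, the adelic random walk $\mathbf S^{(m)}$ is almost surely $\mathbb{A}_{\mathbb{Q}}$-valued for all time.
   Context: Fix a real exponent $b>0$ and a sequence $\sigma=(\sigma_p)_{p\in\mathcal P}$ of nonnegative reals indexed by the set $\mathcal P$ of primes with $\sum_p\sigma_p<\infty$. For a prime $p$, $\mathbb{Q}_p$ denotes the $p$-adic numbers with absolute value $|\cdot|_p$ and $\mathbb{Z}_p$ its closed unit ball. Let $G_p\subset\mathbb{Q}_p$ be the set of $p$-adic numbers of the form $\sum_{k<0}a_kp^k$ with $a_k\in\{0,\dots,p-1\}$, only finitely many nonzero; $G_p$ is a set of representatives of $\mathbb{Q}_p/\mathbb{Z}_p$ and is given the group structure of $\mathbb{Q}_p/\mathbb{Z}_p$. Let $X^{(p)}$ be a $G_p$-valued random variable with $\Pr(|X^{(p)}|_p=p^k)=(p^b-1)p^{-kb}$ for every integer $k\ge1$, and, conditionally on $|X^{(p)}|_p=p^k$, uniformly distributed on the finite set $\{x\in G_p:|x|_p=p^k\}$. Let $X^{(p)}_1,X^{(p)}_2,\dots$ be i.i.d. copies of $X^{(p)}$ and $S^{(p)}_n=X^{(p)}_1+\dots+X^{(p)}_n$ (sum in the group $G_p$), $S^{(p)}_0=0$. Put $D_p=\frac{p^b(p-1)}{p^{b+1}-1}\sigma_p$.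 For an integer $m\ge0$, let $\mathbb{P}^{(m)}_p$ be the law on the Skorokhod space $D(\mathbb{Q}_p)$ of càdlàg paths $[0,\infty)\to\mathbb{Q}_p$ of the process $t\mapsto p^mS^{(p)}_{\lfloor D_pp^{mb}t\rfloor}$. Let $\mathbb{P}^{(m)}_\sigma=\prod_{p\in\mathcal P}\mathbb{P}^{(m)}_p$ be the product measure on $\prod_{p\in\mathcal P}D(\mathbb{Q}_p)$ (independent components, each random walk independent across primes), and call the coordinate process $\mathbf S^{(m)}(t)=(p^mS^{(p)}_{\lfloor D_pp^{mb}t\rfloor})_{p\in\mathcal P}$ the adelic random walk. The (finite rational) adeles are $\mathbb{A}_{\mathbb{Q}}=\{x=(x_p)\in\prod_p\mathbb{Q}_p: x_p\in\mathbb{Z}_p\text{ for all but finitely many }p\}$. *)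

theory Defs
  imports "HOL-Probability.Probability" "HOL-Computational_Algebra.Computational_Algebra"
begin

definition padic_abs :: "nat \<Rightarrow> rat \<Rightarrow> real" where
  "padic_abs p x = (if x = 0 then 0 else
     real p powi (int (multiplicity (int p) (snd (quotient_of x)))
                  - int (multiplicity (int p) (fst (quotient_of x)))))"

definition in_Zp :: "nat \<Rightarrow> rat \<Rightarrow> bool" where
  "in_Zp p x \<longleftrightarrow> padic_abs p x \<le> 1"

text \<open>G_p: the p-adic numbers sum_{k<0} a_k p^k with digits in {0..p-1}, finitely many
  nonzero; as rationals these are exactly the x in [0,1) with p-power denominator.\<close>
definition Gp :: "nat \<Rightarrow> rat set" where
  "Gp p = {x. 0 \<le> x \<and> x < 1 \<and> (\<exists>k::nat. x * of_nat p ^ k \<in> \<int>)}"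

text \<open>Group law of G_p (that of Q_p/Z_p) on representatives: x + y reduced mod 1.\<close>
definition Gp_add :: "rat \<Rightarrow> rat \<Rightarrow> rat" where
  "Gp_add x y = x + y - of_int \<lfloor>x + y\<rfloor>"

fun walk :: "(nat \<Rightarrow> 'a \<Rightarrow> rat) \<Rightarrow> nat \<Rightarrow> 'a \<Rightarrow> rat" where
  "walk X 0 \<omega> = 0"
| "walk X (Suc n) \<omega> = Gp_add (walk X n \<omega>) (X (Suc n) \<omega>)"

definition is_adele :: "(nat \<Rightarrow> rat) \<Rightarrow> bool" where
  "is_adele x \<longleftrightarrow> finite {p. prime p \<and> \<not> in_Zp p (x p)}"

definition Dp :: "real \<Rightarrow> (nat \<Rightarrow> real) \<Rightarrow> nat \<Rightarrow> real" where
  "Dp b \<sigma> p = real p powr b * (real p - 1) / (real p powr (b + 1) - 1) * \<sigma> p"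

end

theory Submission
  imports Defs
begin


definition Zloc :: "nat \<Rightarrow> rat \<Rightarrow> bool" where
  "Zloc p x \<longleftrightarrow> (\<exists>a d::int. d \<noteq> 0 \<and> \<not> int p dvd d \<and> x = of_int a / of_int d)"

lemma Zloc_int: "prime p \<Longrightarrow> Zloc p (of_int k)"
  unfolding Zloc_def by (rule exI[of _ k], rule exI[of _ 1]) (auto simp: prime_int_iff)

lemma Zloc_add:
  assumes "prime p" "Zloc p x" "Zloc p y" shows "Zloc p (x + y)"
proof -
  obtain a d where 1: "d \<noteq> 0" "\<not> int p dvd d" "x = of_int a / of_int d" using assms(2) Zloc_def by auto
  obtain a' d' where 2: "d' \<noteq> 0" "\<not> int p dvd d'" "y = of_int a' / of_int d'" using assms(3) Zloc_def by auto
  have pr: "prime (int p)" using assms(1) by simp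
  have "\<not> int p dvd d * d'" using 1 2 pr by (simp add: prime_dvd_mult_iff)
  moreover have "x + y = of_int (a * d' + a' * d) / of_int (d * d')"
    using 1 2 by (simp add: field_simps)
  ultimately show ?thesis unfolding Zloc_def using 1 2 by (intro exI[of _ "a * d' + a' * d"] exI[of _ "d * d'"]) auto
qed

lemma Zloc_minus:
  assumes "Zloc p x" shows "Zloc p (- x)"
proof -
  obtain a d where 1: "d \<noteq> 0" "\<not> int p dvd d" "x = of_int a / of_int d" using assms Zloc_def by auto
  show ?thesis unfolding Zloc_def using 1 by (intro exI[of _ "- a"] exI[of _ d]) auto
qed

lemma Zloc_in_Zp:
  assumes "prime p" "Zloc p x" shows "in_Zp p x"
proof -
  obtain a d where 1: "d \<noteq> 0" "\<not> int p dvd d" "x = of_int a / of_int d" using assms(2) Zloc_def by auto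
  obtain a' d' where q: "quotient_of x = (a', d')" by (cases "quotient_of x") auto
  have x': "x = of_int a' / of_int d'" using q by (simp add: quotient_of_div)
  have d'pos: "d' > 0" using q quotient_of_denom_pos by blast
  have cop: "coprime a' d'" using q quotient_of_coprime by blast
  have "of_int a' * of_int d = (of_int a * of_int d' :: rat)" using 1 x' d'pos
    by (simp add: field_simps)
  hence eq: "a' * d = a * d'" by (metis of_int_eq_iff of_int_mult)
  have "d' dvd a' * d" using eq by simp
  hence "d' dvd d" using cop by (metis coprime_commute coprime_dvd_mult_right_iff)
  hence "\<not> int p dvd d'" using 1 dvd_trans by blast
  hence m0: "multiplicity (int p) d' = 0" by (rule not_dvd_imp_multiplicity_0)
  have "real p powi (- int (multiplicity (int p) a')) \<le> 1"
    using assms(1) prime_gt_1_nat[OF assms(1)]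
    by (simp add: power_int_minus inverse_le_1_iff one_le_power)
  thus ?thesis unfolding in_Zp_def padic_abs_def using q m0 by simp
qed

lemma abs_bound_Zloc:
  assumes "prime p" "padic_abs p x \<le> real p ^ m" shows "Zloc p (of_nat p ^ m * x)"
proof (cases "x = 0")
  case True then show ?thesis using Zloc_int[of p 0] assms by simp
next
  case False
  obtain a d where q: "quotient_of x = (a, d)" by (cases "quotient_of x") auto
  have x': "x = of_int a / of_int d" using q by (simp add: quotient_of_div)
  have dpos: "d > 0" using q quotient_of_denom_pos by blast
  have cop: "coprime a d" using q quotient_of_coprime by blast
  have pr: "prime (int p)" using assms(1) by simp
  have p1: "real p > 1" using prime_gt_1_nat[OF assms(1)] by simp
  show ?thesis
  proof (cases "int p dvd d")
    case False
    then show ?thesis unfolding Zloc_def using dpos x'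
      by (intro exI[of _ "int p ^ m * a"] exI[of _ d]) auto
  next
    case True
    have "\<not> int p dvd a" using True cop pr
      by (meson coprime_common_divisor not_prime_unit)
    hence ma: "multiplicity (int p) a = 0" by (rule not_dvd_imp_multiplicity_0)
    define v where "v = multiplicity (int p) d"
    have "real p powi int v \<le> real p ^ m"
      using assms(2) False q ma unfolding padic_abs_def v_def by simp
    hence "real p ^ v \<le> real p ^ m" by simp
    hence vm: "v \<le> m" using p1 by (simp add: power_increasing_iff)
    obtain d'' where d: "d = int p ^ v * d''" "\<not> int p dvd d''"
      using multiplicity_decompose'[of d "int p"] dpos pr v_def
      by (metis not_prime_unit order_less_irrefl)
    have "of_nat p ^ m * x = of_int (int p ^ (m - v) * a) / of_int d''"
    proof -
      have "(of_nat p ^ m :: rat) = of_nat p ^ (m - v) * of_nat p ^ v"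
        using vm by (simp add: power_add[symmetric])
      moreover have "d'' \<noteq> 0" using d dpos by auto
      ultimately show ?thesis using x' d p1 by (simp add: field_simps)
    qed
    moreover have "d'' \<noteq> 0" using d dpos by auto
    ultimately show ?thesis unfolding Zloc_def using d by blast
  qed
qed


lemma walk_Zloc:
  assumes "prime p" "\<And>i. i \<in> {1..n} \<Longrightarrow> padic_abs p (X i \<omega>) \<le> real p ^ m"
  shows "Zloc p (of_nat p ^ m * walk X n \<omega>)"
  using assms(2)
proof (induction n)
  case 0 then show ?case using Zloc_int[OF assms(1), of 0] by simp
next
  case (Suc n)
  have ih: "Zloc p (of_nat p ^ m * walk X n \<omega>)" using Suc by auto
  have x: "Zloc p (of_nat p ^ m * X (Suc n) \<omega>)" using Suc.prems[of "Suc n"] abs_bound_Zloc[OF assms(1)] by auto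
  have fl: "Zloc p (- (of_int (int p ^ m * \<lfloor>walk X n \<omega> + X (Suc n) \<omega>\<rfloor>)))"
    by (rule Zloc_minus, rule Zloc_int[OF assms(1)])
  have "of_nat p ^ m * walk X (Suc n) \<omega> = (of_nat p ^ m * walk X n \<omega> + of_nat p ^ m * X (Suc n) \<omega>)
      + (- (of_int (int p ^ m * \<lfloor>walk X n \<omega> + X (Suc n) \<omega>\<rfloor>)))"
    unfolding walk.simps Gp_add_def by (simp add: right_diff_distrib distrib_left)
  then show ?case using Zloc_add[OF assms(1)] ih x fl by metis
qed

lemma Dp_coeff:
  assumes "prime p" "b > 0"
  shows "0 \<le> real p powr b * (real p - 1) / (real p powr (b + 1) - 1)"
    and "real p powr b * (real p - 1) / (real p powr (b + 1) - 1) \<le> 1"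
proof -
  have p1: "real p > 1" using prime_gt_1_nat[OF assms(1)] by simp
  have pb: "real p powr b \<ge> 1" using p1 assms(2) by (simp add: ge_one_powr_ge_zero)
  have e: "real p powr (b + 1) = real p * real p powr b" using p1 by (simp add: powr_add)
  have "real p * real p powr b \<ge> real p" using pb p1 by simp
  hence den: "real p powr (b + 1) - 1 > 0" using e p1 by linarith
  show "0 \<le> real p powr b * (real p - 1) / (real p powr (b + 1) - 1)" using den p1 pb by simp
  show "real p powr b * (real p - 1) / (real p powr (b + 1) - 1) \<le> 1"
    using den pb e by (simp add: pos_divide_le_eq[OF den] algebra_simps)
qed

theorem theorem7:
  fixes M :: "'a measure" and X :: "nat \<Rightarrow> nat \<Rightarrow> 'a \<Rightarrow> rat"
    and b :: real and \<sigma> :: "nat \<Rightarrow> real" and m :: nat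
  assumes PS: "prob_space M"
    and bpos: "b > 0"
    and sig0: "\<And>p. prime p \<Longrightarrow> \<sigma> p \<ge> 0"
    and sigsum: "\<sigma> summable_on {p. prime p}"
    and IND: "prob_space.indep_vars M (\<lambda>_. count_space UNIV) (\<lambda>(p, i). X p i)
           ({p. prime p} \<times> {1..})"
    and "\<And>p i \<omega>. prime p \<Longrightarrow> i \<ge> 1 \<Longrightarrow> \<omega> \<in> space M \<Longrightarrow> X p i \<omega> \<in> Gp p"
    and DIST: "\<And>p i k. prime p \<Longrightarrow> i \<ge> 1 \<Longrightarrow> k \<ge> 1 \<Longrightarrow>
           measure M {\<omega> \<in> space M. padic_abs p (X p i \<omega>) = real p ^ k}
             = (real p powr b - 1) * real p powr (- real k * b)"
    and "\<And>p i k x. prime p \<Longrightarrow> i \<ge> 1 \<Longrightarrow> k \<ge> 1 \<Longrightarrow> x \<in> Gp p \<Longrightarrow>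
           padic_abs p x = real p ^ k \<Longrightarrow>
           measure M {\<omega> \<in> space M. X p i \<omega> = x}
             = measure M {\<omega> \<in> space M. padic_abs p (X p i \<omega>) = real p ^ k}
               / real (card {y \<in> Gp p. padic_abs p y = real p ^ k})"
  shows "AE \<omega> in M. \<forall>t::real \<ge> 0.
           is_adele (\<lambda>p. of_nat p ^ m *
             walk (X p) (nat \<lfloor>Dp b \<sigma> p * real p powr (real m * b) * t\<rfloor>) \<omega>)"
proof -
  interpret P: prob_space M by (rule PS)
  have meas: "X p i \<in> measurable M (count_space UNIV)" if "prime p" "i \<ge> 1" for p i
    using IND that unfolding P.indep_vars_def by auto
  define F where "F p i j = {\<omega> \<in> space M. padic_abs p (X p i \<omega>) > real p ^ j}" for p i j
  define E where "E p i k = {\<omega> \<in> space M. padic_abs p (X p i \<omega>) = real p ^ k}" for p i k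
  have Fsets: "F p i j \<in> sets M" if "prime p" "i \<ge> 1" for p i j
  proof -
    have eq: "F p i j = X p i -` {x. padic_abs p x > real p ^ j} \<inter> space M" unfolding F_def by auto
    show ?thesis unfolding eq by (rule measurable_sets[OF meas[OF that]]) simp
  qed
  have Esets: "E p i k \<in> sets M" if "prime p" "i \<ge> 1" for p i k
  proof -
    have eq: "E p i k = X p i -` {x. padic_abs p x = real p ^ k} \<inter> space M" unfolding E_def by auto
    show ?thesis unfolding eq by (rule measurable_sets[OF meas[OF that]]) simp
  qed
  have Fbound: "measure M (F p i j) \<le> real p powr (- real j * b)" if "prime p" "i \<ge> 1" for p i j
  proof (induction j)
    case 0 then show ?case using prime_gt_1_nat[OF that(1)] by simp
  next
    case (Suc j)
    have p1: "real p > 1" using prime_gt_1_nat[OF that(1)] by simp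
    have disj: "F p i (Suc j) \<inter> E p i (Suc j) = {}" unfolding F_def E_def by auto
    have pj: "real p ^ j < real p ^ Suc j" using p1 by simp
    have sub: "F p i (Suc j) \<union> E p i (Suc j) \<subseteq> F p i j"
      unfolding F_def E_def using pj by (auto simp del: power_Suc)
    have "measure M (F p i (Suc j)) + measure M (E p i (Suc j)) = measure M (F p i (Suc j) \<union> E p i (Suc j))"
      using disj Fsets[OF that] Esets[OF that] by (simp add: P.finite_measure_Union)
    also have "\<dots> \<le> measure M (F p i j)"
      using sub Fsets[OF that] by (intro P.finite_measure_mono) auto
    finally have *: "measure M (F p i (Suc j)) + measure M (E p i (Suc j)) \<le> measure M (F p i j)" .
    have "measure M (E p i (Suc j)) = (real p powr b - 1) * real p powr (- real (Suc j) * b)"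
      unfolding E_def using DIST[OF that(1) that(2), of "Suc j"] by simp
    also have "\<dots> = real p powr (- real j * b) - real p powr (- real (Suc j) * b)"
    proof -
      have "real p powr b * real p powr (- real (Suc j) * b) = real p powr (- real j * b)"
        using p1 by (simp add: powr_add[symmetric] algebra_simps)
      then show ?thesis by (simp add: algebra_simps)
    qed
    finally show ?case using * Suc.IH by linarith
  qed
  define n where "n p t = nat \<lfloor>Dp b \<sigma> p * real p powr (real m * b) * t\<rfloor>" for p t
  define A where "A N p = (if prime p then (\<Union>i\<in>{1..n p (real N)}. F p i m) else {})" for N p
  have Asets: "A N p \<in> sets M" for N p
    unfolding A_def using Fsets by auto
  have Dp0: "0 \<le> Dp b \<sigma> p" and Dple: "Dp b \<sigma> p \<le> \<sigma> p" if "prime p" for p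
  proof -
    have c0: "0 \<le> real p powr b * (real p - 1) / (real p powr (b + 1) - 1)"
      and c1: "real p powr b * (real p - 1) / (real p powr (b + 1) - 1) \<le> 1"
      using Dp_coeff[OF that bpos] by auto
    have eqD: "Dp b \<sigma> p = (real p powr b * (real p - 1) / (real p powr (b + 1) - 1)) * \<sigma> p"
      unfolding Dp_def by simp
    show "0 \<le> Dp b \<sigma> p" unfolding eqD using c0 sig0[OF that] by (rule mult_nonneg_nonneg)
    show "Dp b \<sigma> p \<le> \<sigma> p" unfolding eqD using mult_right_mono[OF c1 sig0[OF that]] by simp
  qed
  have Abound: "measure M (A N p) \<le> (if prime p then \<sigma> p * real N else 0)" for N p
  proof (cases "prime p")
    case False then show ?thesis unfolding A_def by simp
  next
    case True
    have p1: "real p > 1" using prime_gt_1_nat[OF True] by simp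
    have "measure M (A N p) \<le> (\<Sum>i\<in>{1..n p (real N)}. measure M (F p i m))"
      unfolding A_def using True Fsets by (auto intro!: P.finite_measure_subadditive_finite)
    also have "\<dots> \<le> (\<Sum>i\<in>{1..n p (real N)}. real p powr (- real m * b))"
      using Fbound True by (intro sum_mono) auto
    also have "\<dots> = real (n p (real N)) * real p powr (- real m * b)" by simp
    also have "\<dots> \<le> (Dp b \<sigma> p * real p powr (real m * b) * real N) * real p powr (- real m * b)"
    proof (rule mult_right_mono)
      have "0 \<le> Dp b \<sigma> p * real p powr (real m * b) * real N" using Dp0[OF True] by simp
      then show "real (n p (real N)) \<le> Dp b \<sigma> p * real p powr (real m * b) * real N"
        unfolding n_def by linarith
    qed simp
    also have "\<dots> = Dp b \<sigma> p * real N"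
    proof -
      have "real p powr (real m * b) * real p powr (- real m * b) = 1"
        using p1 by (simp add: powr_add[symmetric])
      then show ?thesis by (simp add: algebra_simps)
    qed
    also have "\<dots> \<le> \<sigma> p * real N" using Dple[OF True] by (simp add: mult_right_mono)
    finally show ?thesis using True by simp
  qed
  have sumsig: "summable (\<lambda>p. if prime p then \<sigma> p else 0)"
  proof -
    have "(\<lambda>p. if prime p then \<sigma> p else 0) summable_on UNIV"
      using sigsum by (subst summable_on_cong_neutral[where f="\<lambda>p. if prime p then \<sigma> p else 0" and S=UNIV and T="{p. prime p}" and g=\<sigma>]) auto
    then show ?thesis using sig0 by (subst (asm) summable_on_UNIV_nonneg_real_iff) auto
  qed
  have sumA: "summable (\<lambda>p. measure M (A N p))" for N
  proof (rule summable_comparison_test')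
    show "summable (\<lambda>p. (if prime p then \<sigma> p else 0) * real N)"
      using sumsig by (rule summable_mult2)
    show "norm (measure M (A N p)) \<le> (if prime p then \<sigma> p else 0) * real N" for p
      using Abound[of N p] by (cases "prime p") auto
  qed
  have BC: "AE \<omega> in M. eventually (\<lambda>p. \<omega> \<in> space M - A N p) sequentially" for N
    using Asets sumA by (intro borel_cantelli_AE1) (auto simp: P.emeasure_eq_measure)
  have "AE \<omega> in M. \<forall>N. eventually (\<lambda>p. \<omega> \<in> space M - A N p) sequentially"
    using BC by (simp add: AE_all_countable)
  then show ?thesis
  proof (rule AE_mp, intro AE_I2 impI allI)
    fix \<omega> t assume \<omega>: "\<omega> \<in> space M" and ev: "\<forall>N. eventually (\<lambda>p. \<omega> \<in> space M - A N p) sequentially"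
      and t0: "0 \<le> (t::real)"
    show "is_adele (\<lambda>p. of_nat p ^ m * walk (X p) (nat \<lfloor>Dp b \<sigma> p * real p powr (real m * b) * t\<rfloor>) \<omega>)"
    proof -
      define N where "N = nat \<lceil>t\<rceil>"
      have tN: "t \<le> real N" unfolding N_def by linarith
      obtain P0 where P0: "\<And>p. p \<ge> P0 \<Longrightarrow> \<omega> \<in> space M - A N p"
        using ev[rule_format, of N] unfolding eventually_sequentially by auto
      have "{p. prime p \<and> \<not> in_Zp p (of_nat p ^ m * walk (X p) (nat \<lfloor>Dp b \<sigma> p * real p powr (real m * b) * t\<rfloor>) \<omega>)} \<subseteq> {..<P0}"
      proof (rule subsetI, rule ccontr)
        fix p assume pin: "p \<in> {p. prime p \<and> \<not> in_Zp p (of_nat p ^ m * walk (X p) (nat \<lfloor>Dp b \<sigma> p * real p powr (real m * b) * t\<rfloor>) \<omega>)}"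
          and "p \<notin> {..<P0}"
        hence pr: "prime p" and pge: "p \<ge> P0" by auto
        have nle: "nat \<lfloor>Dp b \<sigma> p * real p powr (real m * b) * t\<rfloor> \<le> n p (real N)"
        proof -
          have "Dp b \<sigma> p * real p powr (real m * b) * t \<le> Dp b \<sigma> p * real p powr (real m * b) * real N"
            using tN Dp0[OF pr] by (intro mult_left_mono) auto
          then show ?thesis unfolding n_def by (intro nat_mono floor_mono)
        qed
        have "\<omega> \<notin> A N p" using P0[OF pge] by auto
        hence notF: "\<omega> \<notin> F p i m" if "i \<in> {1..n p (real N)}" for i
          using that pr unfolding A_def by auto
        have "Zloc p (of_nat p ^ m * walk (X p) (nat \<lfloor>Dp b \<sigma> p * real p powr (real m * b) * t\<rfloor>) \<omega>)"
        proof (rule walk_Zloc[OF pr])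
          fix i assume "i \<in> {1..nat \<lfloor>Dp b \<sigma> p * real p powr (real m * b) * t\<rfloor>}"
          hence "i \<in> {1..n p (real N)}" using nle by auto
          then show "padic_abs p (X p i \<omega>) \<le> real p ^ m" using notF \<omega> unfolding F_def by force
        qed
        then show False using pin Zloc_in_Zp[OF pr] by auto
      qed
      then show "is_adele (\<lambda>p. of_nat p ^ m * walk (X p) (nat \<lfloor>Dp b \<sigma> p * real p powr (real m * b) * t\<rfloor>) \<omega>)"
        unfolding is_adele_def by (rule finite_subset) auto
    qed
  qed
qed

end
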